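(* Let $q$ be a prime power, $g,s\ge 1$ integers, $V=\mathrm{GF}(q^g)^s$ regarded as a $gs$-dimensional $\mathrm{GF}(q)$-vector space, and let $1\le k\le s$. Consider the action of $\mathrm{SL}(s,q^g)$ on the set $\mathcal{F}_k$ of fat $k$-dimensional $\mathrm{GF}(q)$-subspaces of $V$ given by $U\mapsto \{xA: x\in U\}$ for $A\in\mathrm{SL}(s,q^g)$ (scalar matrices with entries in $\mathrm{GF}(q)^*$ act trivially, so this is the action of $\mathrm{SL}(s,q^g)/\mathrm{GF}(q)^*$). If $k<s$, this action is transitive on $\mathcal{F}_k$. If $k=s$, $\mathcal{F}_s$ splits into exactly $\frac{q^g-1}{q-1}$ orbits, all of the same size.
   Context: A $\mathrm{GF}(q)$-subspace $U\le V$ is fat if $\dim_{\mathrm{GF}(q^g)}\langle U\rangle_{\mathrm{GF}(q^g)}=\dim_{\mathrm{GF}(q)}U$, i.e. some (equivalently every) $\mathrm{GF}(q)$-basis of $U$ is linearly independent over $\mathrm{GF}(q^g)$. Vectors of $V$ are row vectors and matrices act by right multiplication. *)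

theory Defs
  imports "HOL-Analysis.Analysis"
begin

text \<open>K is a subfield of the (finite) field 'a; it plays the role of GF(q),
  while 'a plays the role of GF(q^g).  Vectors of V = 'a^'n are row vectors.\<close>

definition subfield :: "'a::field set \<Rightarrow> bool" where
  "subfield K \<longleftrightarrow> 0 \<in> K \<and> 1 \<in> K \<and>
     (\<forall>x\<in>K. \<forall>y\<in>K. x + y \<in> K \<and> x * y \<in> K) \<and>
     (\<forall>x\<in>K. - x \<in> K) \<and> (\<forall>x\<in>K. x \<noteq> 0 \<longrightarrow> inverse x \<in> K)"

definition K_subspace :: "'a::field set \<Rightarrow> ('a^'n) set \<Rightarrow> bool" where
  "K_subspace K U \<longleftrightarrow> 0 \<in> U \<and> (\<forall>x\<in>U. \<forall>y\<in>U. x + y \<in> U) \<and>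
     (\<forall>c\<in>K. \<forall>x\<in>U. c *s x \<in> U)"

definition K_basis :: "'a::field set \<Rightarrow> ('a^'n) set \<Rightarrow> (nat \<Rightarrow> 'a^'n) \<Rightarrow> nat \<Rightarrow> bool" where
  "K_basis K U b m \<longleftrightarrow>
     U = {\<Sum>i<m. c i *s b i | c. \<forall>i<m. c i \<in> K} \<and>
     (\<forall>c. (\<forall>i<m. c i \<in> K) \<longrightarrow> (\<Sum>i<m. c i *s b i) = 0 \<longrightarrow> (\<forall>i<m. c i = 0))"

definition K_dim_eq :: "'a::field set \<Rightarrow> ('a^'n) set \<Rightarrow> nat \<Rightarrow> bool" where
  "K_dim_eq K U m \<longleftrightarrow> (\<exists>b. K_basis K U b m)"

text \<open>Fat k-dimensional K-subspaces: dim_K U = k = dim over 'a of the 'a-span of U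
  (vec.dim U is the dimension of the 'a-span of U).\<close>
definition fat_subspaces :: "'a::field set \<Rightarrow> nat \<Rightarrow> ('a^'n) set set" where
  "fat_subspaces K k = {U. K_subspace K U \<and> K_dim_eq K U k \<and> vec.dim U = k}"

definition act :: "'a::field^'n^'n \<Rightarrow> ('a^'n) set \<Rightarrow> ('a^'n) set" where
  "act A U = (\<lambda>x. x v* A) ` U"

definition SL_orbit :: "('a::field^'n) set \<Rightarrow> ('a^'n) set set" where
  "SL_orbit U = {act A U | A :: 'a^'n^'n. det A = 1}"

end

theory Submission
  imports Defs
begin

lemma vm_sum: "(x::'a::field^'n) v* M = (\<Sum>j\<in>UNIV. x$j *s M$j)"
  by (simp add: vec_eq_iff vector_matrix_mult_def sum_component mult.commute)

lemma vm_scale: "((c::'a::field) *s x) v* M = c *s (x v* M)"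
  by (simp add: vec_eq_iff vector_matrix_mult_def sum_distrib_left mult.assoc)

lemma vm_add: "((x::'a::field^'n) + y) v* M = x v* M + y v* M"
  by (simp add: vector_matrix_left_distrib)

lemma vm_zero: "(0::'a::field^'n) v* M = 0"
  by (simp add: vec_eq_iff vector_matrix_mult_def)

lemma vm_sumI: "finite I \<Longrightarrow> (\<Sum>i\<in>I. (c i::'a::field) *s (v i :: 'a^'n)) v* M = (\<Sum>i\<in>I. c i *s (v i v* M))"
  by (induction I rule: finite_induct) (simp_all add: vm_zero vm_add vm_scale)

lemma row_mult: "((A::'a::field^'n^'m) ** B) $ i = A$i v* B"
  by (simp add: vec_eq_iff vector_matrix_mult_def matrix_matrix_mult_def mult.commute)

lemma axis_vm: "axis i (1::'a::field) v* M = M $ i"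
proof -
  have "\<forall>j. (\<Sum>k\<in>UNIV. axis i 1 $ k * M$k$j) = (\<Sum>k\<in>UNIV. if k = i then M$k$j else 0)"
    by (intro allI sum.cong) (auto simp: axis_def)
  then show ?thesis by (simp add: vec_eq_iff vector_matrix_mult_def)
qed

lemma mat1_row: "(mat 1 :: 'a::field^'n^'n) $ i = axis i 1"
  by (simp add: vec_eq_iff mat_def axis_def)

lemma inv_both:
  assumes h: "det (P::'a::field^'n^'n) \<noteq> 0"
  shows "P ** matrix_inv P = mat 1 \<and> matrix_inv P ** P = mat 1"
proof -
  have "invertible P" using h by (simp add: invertible_det_nz)
  then have "\<exists>A'. P ** A' = mat 1 \<and> A' ** P = mat 1" by (simp add: invertible_def)
  then show ?thesis unfolding matrix_inv_def by (rule someI_ex)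
qed

lemma inv_right: "det (P::'a::field^'n^'n) \<noteq> 0 \<Longrightarrow> P ** matrix_inv P = mat 1"
  using inv_both by blast
lemma inv_left: "det (P::'a::field^'n^'n) \<noteq> 0 \<Longrightarrow> matrix_inv P ** P = mat 1"
  using inv_both by blast
lemma det_inv:
  assumes h: "det (P::'a::field^'n^'n) \<noteq> 0"
  shows "det (matrix_inv P) = inverse (det P)"
proof -
  have "det (matrix_inv P ** P) = 1" by (simp add: inv_left[OF h])
  then have "det P * det (matrix_inv P) = 1" by (simp add: det_mul mult.commute)
  then show ?thesis by (rule inverse_unique[symmetric])
qed

lemma maprows:
  assumes h: "det (P::'a::field^'n^'n) \<noteq> 0"
  shows "P$j v* (matrix_inv P ** R) = R$j"
proof -
  have "P$j v* (matrix_inv P ** R) = (P ** (matrix_inv P ** R))$j" by (simp add: row_mult)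
  also have "\<dots> = R$j" by (simp add: matrix_mul_assoc inv_right[OF h])
  finally show ?thesis .
qed

lemma act_mult: "act (A ** B) U = act B (act A U)"
  by (auto simp: act_def image_image vector_matrix_mul_assoc)

lemma act_one: "act (mat 1 :: 'a::field^'n^'n) U = U"
  by (simp add: act_def)

lemma kernel_det: "det (M::'a::field^'n^'n) = 0 \<Longrightarrow> \<exists>y. y \<noteq> 0 \<and> y v* M = 0"
proof -
  assume "det M = 0"
  hence "\<not> invertible (transpose M)" by (simp add: invertible_det_nz det_transpose)
  hence "\<not> (\<exists>B. B ** transpose M = mat 1)" using invertible_left_inverse by blast
  then obtain x where "transpose M *v x = 0" "x \<noteq> 0" using matrix_left_invertible_ker by blast
  thus ?thesis by auto
qed

lemma kernel_det2:
  assumes h: "det (M::'a::field^'n^'n) \<noteq> 0" and y: "y v* M = 0"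
  shows "y = 0"
proof -
  have "y = y v* (M ** matrix_inv M)" by (simp add: inv_right[OF h])
  also have "\<dots> = (y v* M) v* matrix_inv M" by (simp add: vector_matrix_mul_assoc)
  also have "\<dots> = 0" by (simp add: y vm_zero)
  finally show ?thesis .
qed

lemma sf_basic:
  assumes "subfield K"
  shows "0 \<in> K" "1 \<in> K" "x \<in> K \<Longrightarrow> y \<in> K \<Longrightarrow> x + y \<in> K"
    "x \<in> K \<Longrightarrow> y \<in> K \<Longrightarrow> x * y \<in> K" "x \<in> K \<Longrightarrow> - x \<in> K"
    "x \<in> K \<Longrightarrow> inverse x \<in> K"
  using assms unfolding subfield_def by (auto simp: inverse_zero)

lemma sf_div: "subfield K \<Longrightarrow> x \<in> K \<Longrightarrow> y \<in> K \<Longrightarrow> x / y \<in> K"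
  by (simp add: divide_inverse sf_basic)

lemma sf_sum: "subfield K \<Longrightarrow> (\<And>i. i \<in> I \<Longrightarrow> f i \<in> K) \<Longrightarrow> sum f I \<in> K"
  by (induction I rule: infinite_finite_induct) (auto simp: sf_basic)

lemma sf_prod: "subfield K \<Longrightarrow> (\<And>i. i \<in> I \<Longrightarrow> f i \<in> K) \<Longrightarrow> prod f I \<in> K"
  by (induction I rule: infinite_finite_induct) (auto simp: sf_basic)

lemma sf_det:
  assumes "subfield K" "\<And>i j. (A::'a::field^'n^'n) $ i $ j \<in> K"
  shows "det A \<in> K"
proof -
  have s: "of_int (sign p) \<in> K" for p :: "'n \<Rightarrow> 'n"
    by (simp add: sign_def sf_basic[OF assms(1)])
  show ?thesis unfolding det_def
    by (intro sf_sum[OF assms(1)] sf_basic(4)[OF assms(1)] s sf_prod[OF assms(1)] assms(2))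
qed

section \<open>K-spans\<close>

definition spK :: "'a::field set \<Rightarrow> (nat \<Rightarrow> 'a^'n) \<Rightarrow> nat \<Rightarrow> ('a^'n) set" where
  "spK K f m = {\<Sum>i<m. c i *s f i | c. \<forall>i<m. c i \<in> K}"

definition famind :: "(nat \<Rightarrow> 'a::field^'n) \<Rightarrow> nat \<Rightarrow> bool" where
  "famind f m \<longleftrightarrow> (\<forall>c. (\<Sum>i<m. c i *s f i) = 0 \<longrightarrow> (\<forall>i<m. c i = 0))"

lemma spK_I: "(\<forall>i<m. c i \<in> K) \<Longrightarrow> x = (\<Sum>i<m. c i *s f i) \<Longrightarrow> x \<in> spK K f m"
  unfolding spK_def by blast

lemma spK_E: "x \<in> spK K f m \<Longrightarrow> (\<And>c. \<forall>i<m. c i \<in> K \<Longrightarrow> x = (\<Sum>i<m. c i *s f i) \<Longrightarrow> P) \<Longrightarrow> P"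
  unfolding spK_def by blast

lemma famind_D: "famind f m \<Longrightarrow> (\<Sum>i<m. c i *s f i) = 0 \<Longrightarrow> i < m \<Longrightarrow> c i = 0"
  unfolding famind_def by blast

lemma spK_cong: "(\<And>i. i < m \<Longrightarrow> f i = g i) \<Longrightarrow> spK K f m = spK K g m"
proof -
  assume h: "\<And>i. i < m \<Longrightarrow> f i = g i"
  have "(\<Sum>i<m. c i *s f i) = (\<Sum>i<m. c i *s g i)" for c
    by (rule sum.cong) (auto simp: h)
  then show ?thesis unfolding spK_def by simp
qed

lemma spK_gen:
  assumes "subfield K" "i < m"
  shows "f i \<in> spK K f m"
proof -
  let ?c = "\<lambda>j. if j = i then 1 else (0::'a)"
  have "(\<Sum>j<m. ?c j *s f j) = (\<Sum>j<m. if j = i then f i else 0)"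
    by (rule sum.cong) auto
  also have "\<dots> = f i" using assms(2) by simp
  finally have "f i = (\<Sum>j<m. ?c j *s f j)" by simp
  moreover have "\<forall>j<m. ?c j \<in> K" using sf_basic[OF assms(1)] by auto
  ultimately show ?thesis by (intro spK_I[of m ?c])
qed

lemma spK_in_span: "spK K f m \<subseteq> vec.span (f ` {..<m})"
proof
  fix x assume "x \<in> spK K f m"
  then obtain c where c: "x = (\<Sum>i<m. c i *s f i)" by (rule spK_E) 
  show "x \<in> vec.span (f ` {..<m})" unfolding c
    by (intro vec.span_sum vec.span_scale vec.span_base) auto
qed

lemma act_spK: "act A (spK K f m) = spK K (\<lambda>i. f i v* A) m"
proof -
  have "act A (spK K f m) = {(\<Sum>i<m. c i *s f i) v* A | c. \<forall>i<m. c i \<in> K}"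
    unfolding act_def spK_def by auto
  then show ?thesis by (simp add: vm_sumI spK_def)
qed

lemma spK_scale:
  assumes K: "subfield K" and a: "a \<in> K" "a \<noteq> 0" and j: "j < m"
  shows "spK K (f(j := a *s f j)) m = spK K f m"
proof -
  have e: "(\<Sum>i<m. c i *s (f(j := a *s f j)) i) = (\<Sum>i<m. (c(j := c j * a)) i *s f i)" for c
    by (rule sum.cong) auto
  have e2: "(\<Sum>i<m. c i *s f i) = (\<Sum>i<m. (c(j := c j / a)) i *s (f(j := a *s f j)) i)" for c
    by (rule sum.cong) (auto simp: a)
  show ?thesis
  proof
    show "spK K (f(j := a *s f j)) m \<subseteq> spK K f m"
    proof
      fix x assume "x \<in> spK K (f(j := a *s f j)) m"
      then obtain c where c: "x = (\<Sum>i<m. c i *s (f(j := a *s f j)) i)" "\<forall>i<m. c i \<in> K"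
        unfolding spK_def by blast
      have "\<forall>i<m. (c(j := c j * a)) i \<in> K" using c(2) j a sf_basic(4)[OF K] by auto
      then show "x \<in> spK K f m" unfolding c(1) e by (rule spK_I) simp
    qed
  next
    show "spK K f m \<subseteq> spK K (f(j := a *s f j)) m"
    proof
      fix x assume "x \<in> spK K f m"
      then obtain c where c: "x = (\<Sum>i<m. c i *s f i)" "\<forall>i<m. c i \<in> K"
        unfolding spK_def by blast
      have "\<forall>i<m. (c(j := c j / a)) i \<in> K" using c(2) j a sf_div[OF K] by auto
      then show "x \<in> spK K (f(j := a *s f j)) m" unfolding c(1) e2 by (rule spK_I) simp
    qed
  qed
qed

lemma famind_inj: "famind f m \<Longrightarrow> inj_on f {..<m}"
proof (rule inj_onI, rule ccontr)
  fix i j assume fi: "famind f m" and ij: "i \<in> {..<m}" "j \<in> {..<m}" "f i = f j" "i \<noteq> j"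
  let ?c = "\<lambda>l. if l = i then 1 else if l = j then -1 else (0::'a)"
  have "(\<Sum>l<m. ?c l *s f l) = (\<Sum>l<m. (if l = i then f i else 0) + (if l = j then - f j else 0))"
    by (rule sum.cong) (use ij in auto)
  also have "\<dots> = 0" using ij by (simp add: sum.distrib)
  finally have "?c i = 0" by (rule famind_D[OF fi]) (use ij in auto)
  then show False by simp
qed

lemma famind_indep:
  assumes "famind f m"
  shows "vec.independent (f ` {..<m})"
proof
  assume "vec.dependent (f ` {..<m})"
  moreover have fin: "finite (f ` {..<m})" by simp
  ultimately obtain u where u: "\<exists>v\<in>f ` {..<m}. u v \<noteq> 0" "(\<Sum>v\<in>f ` {..<m}. u v *s v) = 0"
    by (auto simp: vec.dependent_finite)
  have inj: "inj_on f {..<m}" using famind_inj[OF assms] .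
  have s: "(\<Sum>i<m. u (f i) *s f i) = 0" using u(2) by (simp add: sum.reindex[OF inj])
  have "\<forall>i<m. u (f i) = 0" using famind_D[OF assms s] by blast
  then show False using u(1) by auto
qed

lemma indep_famind:
  assumes inj: "inj_on f {..<m}" and ind: "vec.independent (f ` {..<m})"
  shows "famind f m"
  unfolding famind_def
proof (rule allI, rule impI)
  fix c assume s: "(\<Sum>i<m. c i *s f i) = 0"
  let ?u = "\<lambda>v. c (the_inv_into {..<m} f v)"
  have "(\<Sum>v\<in>f ` {..<m}. ?u v *s v) = (\<Sum>i<m. ?u (f i) *s f i)"
    by (simp add: sum.reindex[OF inj])
  also have "\<dots> = (\<Sum>i<m. c i *s f i)"
    by (rule sum.cong) (auto simp: the_inv_into_f_f[OF inj])
  finally have "(\<Sum>v\<in>f ` {..<m}. ?u v *s v) = 0" using s by simp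
  moreover have fin: "finite (f ` {..<m})" by simp
  have nd: "\<not> (\<exists>u. (\<exists>v\<in>f ` {..<m}. u v \<noteq> 0) \<and> (\<Sum>v\<in>f ` {..<m}. u v *s v) = 0)"
    using ind vec.dependent_finite[OF fin] by simp
  note nd2 = nd[unfolded not_ex, rule_format, of ?u]
  ultimately have "\<forall>v\<in>f ` {..<m}. ?u v = 0" using nd2 by blast
  then show "\<forall>i<m. c i = 0" by (auto simp: the_inv_into_f_f[OF inj])
qed


definition ei :: "nat \<Rightarrow> 'n::finite" where
  "ei = (SOME h. bij_betw h {..<CARD('n)} (UNIV::'n set))"

definition ie :: "'n::finite \<Rightarrow> nat" where
  "ie = inv_into {..<CARD('n)} ei"

lemma ei_bij: "bij_betw (ei::nat \<Rightarrow> 'n::finite) {..<CARD('n)} UNIV"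
proof -
  have "\<exists>h. bij_betw h {..<CARD('n)} (UNIV::'n set)"
    using ex_bij_betw_nat_finite[of "UNIV::'n set"] by (simp add: atLeast0LessThan)
  then show ?thesis unfolding ei_def by (rule someI_ex)
qed

lemma ei_surj: "(ei::nat \<Rightarrow> 'n::finite) ` {..<CARD('n)} = UNIV"
  using ei_bij[where 'n='n] by (simp add: bij_betw_def)

lemma ei_injon: "inj_on (ei::nat \<Rightarrow> 'n::finite) {..<CARD('n)}"
  using ei_bij[where 'n='n] by (simp add: bij_betw_def)

lemma ie_lt: "ie (j::'n::finite) < CARD('n)"
proof -
  have "j \<in> (ei::nat \<Rightarrow> 'n) ` {..<CARD('n)}" using ei_surj[where 'n='n] by simp
  then have "inv_into {..<CARD('n)} ei j \<in> {..<CARD('n)}" by (rule inv_into_into)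
  then show ?thesis unfolding ie_def by simp
qed

lemma ei_ie: "ei (ie (j::'n::finite)) = j"
proof -
  have "j \<in> (ei::nat \<Rightarrow> 'n) ` {..<CARD('n)}" using ei_surj[where 'n='n] by simp
  then show ?thesis unfolding ie_def by (rule f_inv_into_f)
qed

lemma ie_ei: "i < CARD('n) \<Longrightarrow> ie (ei i :: 'n::finite) = i"
  unfolding ie_def by (rule inv_into_f_f[OF ei_injon]) simp

lemma ei_inj:
  assumes "i < CARD('n)" "j < CARD('n)" "(ei i :: 'n::finite) = ei j"
  shows "i = j"
proof -
  have "ie (ei i :: 'n) = ie (ei j :: 'n)" using assms(3) by simp
  then show ?thesis using ie_ei[OF assms(1)] ie_ei[OF assms(2)] by simp
qed

lemma sum_reidx: "(\<Sum>j\<in>(UNIV::'n::finite set). g j) = (\<Sum>i<CARD('n). g (ei i))"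
  using sum.reindex_bij_betw[OF ei_bij, of g] by simp

lemma vm_rows: "(y::'a::field^'n::finite) v* M = (\<Sum>i<CARD('n). y $ ei i *s M $ ei i)"
  by (simp add: vm_sum sum_reidx)

lemma rows_beta: "i < CARD('n) \<Longrightarrow> ((\<chi> j. f (ie j)) :: 'a^'n::finite) $ ei i = f i"
  by (simp add: ie_ei)

lemma famdet:
  assumes "famind f CARD('n)"
  shows "det ((\<chi> j. f (ie j)) :: 'a::field^'n::finite^'n) \<noteq> 0"
proof
  let ?M = "(\<chi> j. f (ie j)) :: 'a::field^'n::finite^'n"
  assume "det ?M = 0"
  then obtain y where y: "y \<noteq> 0" "y v* ?M = 0" using kernel_det by blast
  have "(\<Sum>i<CARD('n). y $ ei i *s f i) = y v* ?M"
    unfolding vm_rows by (rule sum.cong) (auto simp: ie_ei)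
  then have s: "(\<Sum>i<CARD('n). y $ ei i *s f i) = 0" using y(2) by simp
  have yz: "\<forall>i<CARD('n). y $ ei i = 0" using famind_D[OF assms s] by blast
  have "y $ j = 0" for j using spec[OF yz, of "ie j"] ie_lt[of j] by (simp add: ei_ie)
  then have "y = 0" by (simp add: vec_eq_iff)
  then show False using y(1) by simp
qed

lemma detfam:
  assumes "det (M::'a::field^'n::finite^'n) \<noteq> 0"
  shows "famind (\<lambda>i. M $ ei i) CARD('n)"
  unfolding famind_def
proof (rule allI, rule impI)
  fix c assume s: "(\<Sum>i<CARD('n). c i *s M $ ei i) = 0"
  let ?y = "(\<chi> j. c (ie j)) :: 'a^'n"
  have "?y v* M = (\<Sum>i<CARD('n). c i *s M $ ei i)"
    unfolding vm_rows by (rule sum.cong) (auto simp: ie_ei)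
  then have y0: "?y = 0" using kernel_det2[OF assms] s by simp
  have "c i = 0" if "i < CARD('n)" for i
  proof -
    have "c i = ?y $ ei i" using that by (simp add: ie_ei)
    then show ?thesis using y0 by simp
  qed
  then show "\<forall>i<CARD('n). c i = 0" by blast
qed

lemma card_n_pos: "0 < CARD('n::finite)"
  by (simp add: card_gt_0_iff)

lemma dim_univ: "vec.dim (UNIV :: ('a::field^'n::finite) set) = CARD('n)"
  by (simp add: card_cart_basis)

lemma ext_step:
  assumes fi: "famind (f::nat \<Rightarrow> 'a::field^'n::finite) k" and k: "k < CARD('n)"
  shows "\<exists>v. famind (f(k := v)) (Suc k)"
proof -
  let ?S = "f ` {..<k}"
  have "vec.dim ?S \<le> card ?S" by (rule vec.dim_le_card) (auto intro: vec.span_base)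
  also have "\<dots> \<le> k" using card_image_le[of "{..<k}" f] by simp
  finally have dS: "vec.dim ?S \<le> k" .
  have "vec.span ?S \<noteq> UNIV"
  proof
    assume "vec.span ?S = UNIV"
    then have "vec.dim (UNIV :: ('a^'n) set) = vec.dim ?S" using vec.dim_span[of ?S] by simp
    then show False using dS k dim_univ[where 'a='a and 'n='n] by simp
  qed
  then obtain v where v: "v \<notin> vec.span ?S" by blast
  have "famind (f(k := v)) (Suc k)"
    unfolding famind_def
  proof (rule allI, rule impI)
    fix c assume s: "(\<Sum>i<Suc k. c i *s (f(k := v)) i) = 0"
    have eq: "(\<Sum>i<k. c i *s (f(k := v)) i) = (\<Sum>i<k. c i *s f i)"
      by (rule sum.cong) auto
    let ?a = "\<Sum>i<k. c i *s f i"
    have s2: "?a + c k *s v = 0" using s by (simp add: eq)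
    have ck: "c k = 0"
    proof (rule ccontr)
      assume ck: "c k \<noteq> 0"
      have "c k *s v = - ?a" using s2 by (simp add: eq_neg_iff_add_eq_0 add.commute)
      then have "inverse (c k) *s (c k *s v) = inverse (c k) *s (- ?a)" by simp
      then have "v = inverse (c k) *s (- ?a)" using ck by simp
      moreover have "?a \<in> vec.span ?S" by (intro vec.span_sum vec.span_scale vec.span_base) auto
      moreover have "inverse (c k) *s (- ?a) \<in> vec.span ?S"
        by (rule vec.span_scale, rule vec.span_neg) fact
      ultimately have "v \<in> vec.span ?S" by simp
      then show False using v by simp
    qed
    then have "?a = 0" using s2 by simp
    then have "\<forall>i<k. c i = 0" using famind_D[OF fi] by blast
    then show "\<forall>i<Suc k. c i = 0" using ck less_Suc_eq by auto
  qed
  then show ?thesis by blast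
qed

lemma ext_fam:
  assumes "famind (f::nat \<Rightarrow> 'a::field^'n::finite) k" "k \<le> CARD('n)"
  shows "\<exists>h. (\<forall>i<k. h i = f i) \<and> famind h CARD('n)"
  using assms
proof (induction "CARD('n) - k" arbitrary: f k)
  case 0
  then have "k = CARD('n)" by simp
  then show ?case using 0 by blast
next
  case (Suc d)
  then have k: "k < CARD('n)" by simp
  obtain v where v: "famind (f(k := v)) (Suc k)" using ext_step[OF Suc.prems(1) k] by blast
  have "d = CARD('n) - Suc k" using Suc.hyps(2) by simp
  then obtain h where h: "\<forall>i<Suc k. h i = (f(k := v)) i" "famind h CARD('n)"
    using Suc.hyps(1)[OF _ v] k by auto
  then show ?case by (intro exI[of _ h]) auto
qed


section \<open>Fat subspaces and matrices\<close>

lemma basis_famind: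
  assumes K: "subfield K" and b: "K_basis K U u k" and d: "vec.dim U = k"
  shows "famind u k"
proof -
  let ?S = "u ` {..<k}"
  have U: "U = spK K u k" using b unfolding K_basis_def spK_def by simp
  have SU: "?S \<subseteq> U" unfolding U using spK_gen[OF K] by blast
  have US: "U \<subseteq> vec.span ?S" unfolding U by (rule spK_in_span)
  have "k \<le> card ?S" using vec.dim_le_card[OF US] d by simp
  moreover have "card ?S \<le> k" using card_image_le[of "{..<k}" u] by simp
  ultimately have c: "card ?S = k" by simp
  have inj: "inj_on u {..<k}" using c by (simp add: inj_on_iff_eq_card)
  have "vec.independent ?S"
    by (rule vec.card_le_dim_spanning[OF SU US]) (use c d in auto)
  then show ?thesis using indep_famind[OF inj] by simp
qed

lemma fat_from_det:
  assumes K: "subfield K" and P: "det (P::'a::field^'n::finite^'n) \<noteq> 0"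
  shows "spK K (\<lambda>i. P $ ei i) CARD('n) \<in> fat_subspaces K CARD('n)"
proof -
  let ?r = "\<lambda>i. P $ ei i" and ?n = "CARD('n)"
  let ?U = "spK K ?r ?n"
  have fi: "famind ?r ?n" by (rule detfam[OF P])
  have sub: "K_subspace K ?U"
    unfolding K_subspace_def
  proof (intro conjI ballI)
    show "0 \<in> ?U" by (rule spK_I[where c = "\<lambda>_. 0"]) (simp_all add: sf_basic(1)[OF K])
  next
    fix x y assume xy: "x \<in> ?U" "y \<in> ?U"
    obtain c where c: "\<forall>i<?n. c i \<in> K" "x = (\<Sum>i<?n. c i *s ?r i)"
      using xy(1) by (rule spK_E)
    obtain d where d: "\<forall>i<?n. d i \<in> K" "y = (\<Sum>i<?n. d i *s ?r i)"
      using xy(2) by (rule spK_E)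
    have "x + y = (\<Sum>i<?n. (c i + d i) *s ?r i)"
      unfolding c(2) d(2) by (simp add: sum.distrib[symmetric] vec.scale_left_distrib)
    moreover have "\<forall>i<?n. c i + d i \<in> K" using c d sf_basic(3)[OF K] by auto
    ultimately show "x + y \<in> ?U" by (rule spK_I[rotated])
  next
    fix a x assume a: "a \<in> K" and xU: "x \<in> ?U"
    obtain c where c: "\<forall>i<?n. c i \<in> K" "x = (\<Sum>i<?n. c i *s ?r i)"
      using xU by (rule spK_E)
    have "a *s x = (\<Sum>i<?n. (a * c i) *s ?r i)"
      unfolding c(2) by (simp add: vec.scale_sum_right)
    moreover have "\<forall>i<?n. a * c i \<in> K" using c a sf_basic(4)[OF K] by auto
    ultimately show "a *s x \<in> ?U" by (rule spK_I[rotated])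
  qed
  have bas: "K_basis K ?U ?r ?n"
    unfolding K_basis_def spK_def using fi unfolding famind_def by blast
  have "vec.dim ?U \<le> ?n" using vec.dim_subset[of ?U UNIV] dim_univ[where 'a='a and 'n='n] by simp
  moreover have "?n \<le> vec.dim ?U"
  proof -
    have "card (?r ` {..<?n}) = ?n" using famind_inj[OF fi] by (simp add: card_image)
    moreover have "?r ` {..<?n} \<subseteq> ?U" using spK_gen[OF K, where f = ?r] by auto
    ultimately show ?thesis using vec.independent_card_le_dim[OF _ famind_indep[OF fi]] by simp
  qed
  ultimately have "vec.dim ?U = ?n" by simp
  then show ?thesis using sub bas unfolding fat_subspaces_def K_dim_eq_def by blast
qed

lemma fat_good:
  assumes K: "subfield K" and U: "U \<in> (fat_subspaces K CARD('n) :: ('a::field^'n::finite) set set)"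
  shows "\<exists>P::'a^'n^'n. det P \<noteq> 0 \<and> U = spK K (\<lambda>i. P $ ei i) CARD('n)"
proof -
  obtain u where u: "K_basis K U u CARD('n)" and d: "vec.dim U = CARD('n)"
    using U unfolding fat_subspaces_def K_dim_eq_def by blast
  have fi: "famind u CARD('n)" by (rule basis_famind[OF K u d])
  let ?P = "(\<chi> j. u (ie j)) :: 'a^'n^'n"
  have "det ?P \<noteq> 0" by (rule famdet[OF fi])
  moreover have "U = spK K u CARD('n)" using u unfolding K_basis_def spK_def by simp
  moreover have "spK K u CARD('n) = spK K (\<lambda>i. ?P $ ei i) CARD('n)"
    by (rule spK_cong) (simp add: ie_ei)
  ultimately have "det ?P \<noteq> 0 \<and> U = spK K (\<lambda>i. ?P $ ei i) CARD('n)" by simp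
  then show ?thesis by (rule exI)
qed

lemma inv_det_in_K:
  assumes K: "subfield K" and P: "det (P::'a::field^'n::finite^'n) \<noteq> 0"
    and Q: "\<And>i. i < CARD('n) \<Longrightarrow> Q $ ei i \<in> spK K (\<lambda>i. P $ ei i) CARD('n)"
  shows "det Q / det P \<in> K"
proof -
  have "\<forall>j. \<exists>c. (\<forall>i<CARD('n). c i \<in> K) \<and> Q $ j = (\<Sum>i<CARD('n). c i *s P $ ei i)"
  proof
    fix j :: 'n
    have "Q $ ei (ie j) \<in> spK K (\<lambda>i. P $ ei i) CARD('n)" by (rule Q[OF ie_lt])
    then have "Q $ j \<in> spK K (\<lambda>i. P $ ei i) CARD('n)" by (simp only: ei_ie)
    then obtain c where "\<forall>i<CARD('n). c i \<in> K" "Q $ j = (\<Sum>i<CARD('n). c i *s P $ ei i)"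
      by (rule spK_E)
    then show "\<exists>c. (\<forall>i<CARD('n). c i \<in> K) \<and> Q $ j = (\<Sum>i<CARD('n). c i *s P $ ei i)"
      by (intro exI[of _ c] conjI)
  qed
  then have "\<exists>C. \<forall>j. (\<forall>i<CARD('n). C j i \<in> K) \<and> Q $ j = (\<Sum>i<CARD('n). C j i *s P $ ei i)"
    by (rule choice)
  then obtain C where CC: "\<forall>j. (\<forall>i<CARD('n). C j i \<in> K) \<and> Q $ j = (\<Sum>i<CARD('n). C j i *s P $ ei i)"
    by (rule exE)
  have C: "\<And>j. \<forall>i<CARD('n). C j i \<in> K" "\<And>j. Q $ j = (\<Sum>i<CARD('n). C j i *s P $ ei i)"
    using CC by simp_all
  let ?C = "(\<chi> j l. C j (ie l)) :: 'a^'n^'n"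
  have "Q $ j = (?C ** P) $ j" for j
  proof -
    have "(?C ** P) $ j = (\<Sum>i<CARD('n). C j i *s P $ ei i)"
      unfolding row_mult vm_rows by (rule sum.cong) (auto simp: ie_ei)
    then show "Q $ j = (?C ** P) $ j" using C(2) by simp
  qed
  then have "Q = ?C ** P" by (subst vec_eq_iff) blast
  then have "det Q = det ?C * det P" by (simp add: det_mul)
  then have "det Q / det P = det ?C" using P by simp
  moreover have "det ?C \<in> K" by (rule sf_det[OF K]) (simp add: C(1) ie_lt)
  ultimately show ?thesis by simp
qed

lemma gen_map:
  assumes P: "det (P::'a::field^'n::finite^'n) \<noteq> 0"
  shows "act (matrix_inv P ** R) (spK K (\<lambda>i. P $ ei i) m) = spK K (\<lambda>i. R $ ei i) m"
    and "det (matrix_inv P ** R) = det R / det P"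
  by (simp_all add: act_spK maprows[OF P] det_mul det_inv[OF P] divide_inverse mult.commute)

lemma orb_fw:
  assumes K: "subfield K" and P: "det (P::'a::field^'n::finite^'n) \<noteq> 0"
    and U: "U = spK K (\<lambda>i. P $ ei i) CARD('n)"
    and W: "W = spK K (\<lambda>i. Q $ ei i) CARD('n)"
    and o: "W \<in> SL_orbit U"
  shows "det Q / det P \<in> K"
proof -
  obtain A :: "'a^'n^'n" where A: "det A = 1" "W = act A U" using o unfolding SL_orbit_def by blast
  have W2: "W = spK K (\<lambda>i. (P ** A) $ ei i) CARD('n)"
    using A(2) unfolding U act_spK row_mult by simp
  have dPA: "det (P ** A) = det P" using A(1) by (simp add: det_mul)
  have "det Q / det (P ** A) \<in> K"
  proof (rule inv_det_in_K[OF K])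
    show "det (P ** A) \<noteq> 0" using dPA P by simp
    fix i assume "i < CARD('n)"
    then have "Q $ ei i \<in> W" unfolding W by (rule spK_gen[OF K])
    then show "Q $ ei i \<in> spK K (\<lambda>i. (P ** A) $ ei i) CARD('n)" using W2 by simp
  qed
  then show ?thesis using dPA by simp
qed

lemma scale_row_det:
  "det ((\<chi> i. if i = j then c *s Q $ i else Q $ i) :: 'a::field^'n::finite^'n) = c * det Q"
  using det_row_mul[of j c "\<lambda>i. Q $ i" "\<lambda>i. Q $ i"] by simp

lemma orb_bw:
  assumes K: "subfield K" and P: "det (P::'a::field^'n::finite^'n) \<noteq> 0"
    and U: "U = spK K (\<lambda>i. P $ ei i) CARD('n)"
    and Q: "det Q \<noteq> 0"
    and W: "W = spK K (\<lambda>i. Q $ ei i) CARD('n)"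
    and l: "det Q / det P \<in> K"
  shows "W \<in> SL_orbit U"
proof -
  let ?n = "CARD('n)"
  define \<mu> where "\<mu> = inverse (det Q / det P)"
  have mK: "\<mu> \<in> K" unfolding \<mu>_def using l sf_basic(6)[OF K] by blast
  have m0: "\<mu> \<noteq> 0" unfolding \<mu>_def using P Q by simp
  define Q' where "Q' = ((\<chi> i. if i = ei 0 then \<mu> *s Q $ i else Q $ i) :: 'a^'n^'n)"
  have dQ': "det Q' = det P" unfolding Q'_def scale_row_det \<mu>_def using P Q by simp
  have n0: "0 < ?n" by (rule card_n_pos)
  have "spK K (\<lambda>i. Q' $ ei i) ?n = spK K ((\<lambda>i. Q $ ei i)(0 := \<mu> *s Q $ ei 0)) ?n"
    by (rule spK_cong) (auto simp: Q'_def dest: ei_inj[OF _ n0])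
  also have "\<dots> = W" unfolding W by (rule spK_scale[OF K mK m0 n0])
  finally have W': "spK K (\<lambda>i. Q' $ ei i) ?n = W" .
  have "act (matrix_inv P ** Q') U = W" using gen_map(1)[OF P] W' U by simp
  moreover have "det (matrix_inv P ** Q') = 1" using gen_map(2)[OF P] dQ' P by simp
  ultimately show ?thesis unfolding SL_orbit_def by blast
qed


lemma orbit_self: "U \<in> SL_orbit (U :: ('a::field^'n::finite) set)"
proof -
  have "U = act (mat 1 :: 'a^'n^'n) U \<and> det (mat 1 :: 'a^'n^'n) = 1" by (simp add: act_one)
  then show ?thesis unfolding SL_orbit_def by blast
qed

lemma det1_inv: "det (A::'a::field^'n::finite^'n) = 1 \<Longrightarrow> det (matrix_inv A) = 1"
  using det_inv[of A] by simp

lemma orbit_trans: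
  assumes "W \<in> SL_orbit (U :: ('a::field^'n::finite) set)"
  shows "SL_orbit W = SL_orbit U"
proof -
  obtain A :: "'a^'n^'n" where A: "det A = 1" "W = act A U" using assms unfolding SL_orbit_def by blast
  show ?thesis
  proof
    show "SL_orbit W \<subseteq> SL_orbit U"
    proof
      fix X assume "X \<in> SL_orbit W"
      then obtain B :: "'a^'n^'n" where B: "det B = 1" "X = act B W" unfolding SL_orbit_def by blast
      have "X = act (A ** B) U" using A B by (simp add: act_mult)
      moreover have "det (A ** B) = 1" using A B by (simp add: det_mul)
      ultimately show "X \<in> SL_orbit U" unfolding SL_orbit_def by blast
    qed
  next
    show "SL_orbit U \<subseteq> SL_orbit W"
    proof
      fix X assume "X \<in> SL_orbit U"
      then obtain C :: "'a^'n^'n" where C: "det C = 1" "X = act C U" unfolding SL_orbit_def by blast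
      have "act (matrix_inv A ** C) W = act (A ** (matrix_inv A ** C)) U" using A by (simp add: act_mult)
      also have "A ** (matrix_inv A ** C) = C"
        using A(1) by (simp add: matrix_mul_assoc inv_right)
      finally have "X = act (matrix_inv A ** C) W" using C by simp
      moreover have "det (matrix_inv A ** C) = 1" using A C by (simp add: det_mul det1_inv)
      ultimately show "X \<in> SL_orbit W" unfolding SL_orbit_def by blast
    qed
  qed
qed

lemma orbit_eq_iff: "SL_orbit U = SL_orbit W \<longleftrightarrow> W \<in> SL_orbit (U :: ('a::field^'n::finite) set)"
proof
  assume e: "SL_orbit U = SL_orbit W"
  show "W \<in> SL_orbit U" using orbit_self[of W] e by simp
next
  assume h: "W \<in> SL_orbit U"
  show "SL_orbit U = SL_orbit W" using orbit_trans[OF h] by (rule sym)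
qed

section \<open>Cosets of K*\<close>

definition cls :: "'a::field set \<Rightarrow> 'a \<Rightarrow> 'a set" where
  "cls K x = (\<lambda>y. x * y) ` (K - {0})"

lemma cls_eq:
  assumes K: "subfield K" and a: "a \<noteq> 0" and b: "b \<noteq> 0"
  shows "cls K a = cls K b \<longleftrightarrow> b / a \<in> K"
proof
  assume e: "cls K a = cls K b"
  have "b \<in> cls K b" unfolding cls_def using sf_basic(2)[OF K] by force
  then have "b \<in> cls K a" using e by simp
  then obtain y where "y \<in> K" "b = a * y" unfolding cls_def by blast
  then show "b / a \<in> K" using a by simp
next
  assume t: "b / a \<in> K"
  have t0: "b / a \<noteq> 0" using a b by simp
  show "cls K a = cls K b"
  proof
    show "cls K a \<subseteq> cls K b"
    proof
      fix x assume "x \<in> cls K a"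
      then obtain y where y: "y \<in> K" "y \<noteq> 0" "x = a * y" unfolding cls_def by blast
      have "x = b * (y / (b / a))" using y a b by (simp add: field_simps)
      moreover have "y / (b / a) \<in> K" using sf_div[OF K y(1) t] .
      moreover have "y / (b / a) \<noteq> 0" using y t0 by simp
      ultimately show "x \<in> cls K b" unfolding cls_def by blast
    qed
  next
    show "cls K b \<subseteq> cls K a"
    proof
      fix x assume "x \<in> cls K b"
      then obtain y where y: "y \<in> K" "y \<noteq> 0" "x = b * y" unfolding cls_def by blast
      have "x = a * ((b / a) * y)" using y a b by (simp add: field_simps)
      moreover have "(b / a) * y \<in> K" using sf_basic(4)[OF K t y(1)] .
      moreover have "(b / a) * y \<noteq> 0" using y t0 by simp
      ultimately show "x \<in> cls K a" unfolding cls_def by blast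
    qed
  qed
qed

lemma cls_count:
  assumes K: "subfield K"
  shows "card (cls K ` (UNIV - {0::'a::{field,finite}})) * (card K - 1) = CARD('a) - 1"
proof -
  let ?C = "cls K ` (UNIV - {0::'a})"
  have U: "\<Union>?C = UNIV - {0}"
  proof
    show "\<Union>?C \<subseteq> UNIV - {0}" unfolding cls_def by auto
    show "UNIV - {0} \<subseteq> \<Union>?C"
    proof
      fix x :: 'a assume x: "x \<in> UNIV - {0}"
      have "x \<in> cls K x" unfolding cls_def using sf_basic(2)[OF K] by force
      then show "x \<in> \<Union>?C" using x by blast
    qed
  qed
  have c: "\<forall>c\<in>?C. card c = card K - 1"
  proof
    fix c assume "c \<in> ?C"
    then obtain x where x: "x \<noteq> 0" "c = cls K x" by blast
    have "inj_on (\<lambda>y. x * y) (K - {0})" using x(1) by (auto simp: inj_on_def)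
    then have "card c = card (K - {0})" unfolding x(2) cls_def by (simp add: card_image)
    also have "\<dots> = card K - 1" using sf_basic(1)[OF K] by (simp add: card_Diff_singleton)
    finally show "card c = card K - 1" .
  qed
  have d: "\<forall>c1\<in>?C. \<forall>c2\<in>?C. c1 \<noteq> c2 \<longrightarrow> c1 \<inter> c2 = {}"
  proof (intro ballI impI)
    fix c1 c2 assume "c1 \<in> ?C" "c2 \<in> ?C" "c1 \<noteq> c2"
    then obtain a b where ab: "a \<noteq> 0" "b \<noteq> 0" "c1 = cls K a" "c2 = cls K b" "c1 \<noteq> c2" by blast
    show "c1 \<inter> c2 = {}"
    proof (rule ccontr)
      assume "c1 \<inter> c2 \<noteq> {}"
      then obtain y1 y2 where y: "y1 \<in> K" "y1 \<noteq> 0" "y2 \<in> K" "y2 \<noteq> 0" "a * y1 = b * y2"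
        unfolding ab cls_def by auto
      have "b / a = y1 / y2" using y ab by (simp add: field_simps)
      then have "b / a \<in> K" using sf_div[OF K y(1) y(3)] by simp
      then show False using cls_eq[OF K ab(1,2)] ab by simp
    qed
  qed
  have "(card K - 1) * card ?C = card (\<Union>?C)"
    by (rule card_partition) (use c d in auto)
  also have "\<dots> = CARD('a) - 1" unfolding U by (simp add: card_Diff_singleton)
  finally show ?thesis by (simp add: mult.commute)
qed

section \<open>Orbit invariant\<close>

definition PU :: "'a::field set \<Rightarrow> ('a^'n::finite) set \<Rightarrow> 'a^'n^'n" where
  "PU K U = (SOME P. det P \<noteq> 0 \<and> U = spK K (\<lambda>i. P $ ei i) CARD('n))"

definition Phi :: "'a::field set \<Rightarrow> ('a^'n::finite) set \<Rightarrow> 'a set" where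
  "Phi K U = cls K (det (PU K U))"

lemma PU_good:
  assumes "subfield K" "U \<in> (fat_subspaces K CARD('n) :: ('a::field^'n::finite) set set)"
  shows "det (PU K U) \<noteq> 0 \<and> U = spK K (\<lambda>i. PU K U $ ei i) CARD('n)"
  unfolding PU_def by (rule someI_ex[OF fat_good[OF assms]])

lemma key:
  assumes K: "subfield K"
    and U: "U \<in> (fat_subspaces K CARD('n) :: ('a::field^'n::finite) set set)"
    and W: "W \<in> (fat_subspaces K CARD('n) :: ('a::field^'n::finite) set set)"
  shows "SL_orbit U = SL_orbit W \<longleftrightarrow> Phi K U = Phi K W"
proof -
  note P = PU_good[OF K U] and Q = PU_good[OF K W]
  have "SL_orbit U = SL_orbit W \<longleftrightarrow> W \<in> SL_orbit U" by (rule orbit_eq_iff)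
  also have "\<dots> \<longleftrightarrow> det (PU K W) / det (PU K U) \<in> K"
    using orb_fw[OF K conjunct1[OF P] conjunct2[OF P] conjunct2[OF Q]]
      orb_bw[OF K conjunct1[OF P] conjunct2[OF P] conjunct1[OF Q] conjunct2[OF Q]] by blast
  also have "\<dots> \<longleftrightarrow> Phi K U = Phi K W"
    unfolding Phi_def using cls_eq[OF K conjunct1[OF P] conjunct1[OF Q]] by simp
  finally show ?thesis .
qed

lemma card_img_eq:
  assumes "\<And>x y. x \<in> S \<Longrightarrow> y \<in> S \<Longrightarrow> f x = f y \<longleftrightarrow> g x = g y"
  shows "card (f ` S) = card (g ` S)"
proof -
  let ?T = "(\<lambda>x. (f x, g x)) ` S"
  have i1: "inj_on fst ?T" using assms by (auto simp: inj_on_def)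
  have i2: "inj_on snd ?T" using assms by (auto simp: inj_on_def)
  have "card (f ` S) = card ?T" using card_image[OF i1] by (simp add: image_image)
  also have "\<dots> = card (g ` S)" using card_image[OF i2] by (simp add: image_image)
  finally show ?thesis .
qed

lemma Phi_img:
  assumes K: "subfield K"
  shows "Phi K ` (fat_subspaces K CARD('n) :: ('a::field^'n::finite) set set) = cls K ` (UNIV - {0})"
proof
  show "Phi K ` (fat_subspaces K CARD('n) :: ('a::field^'n::finite) set set) \<subseteq> cls K ` (UNIV - {0})"
  proof
    fix z assume "z \<in> Phi K ` (fat_subspaces K CARD('n) :: ('a::field^'n::finite) set set)"
    then obtain U where U: "U \<in> (fat_subspaces K CARD('n) :: ('a::field^'n::finite) set set)" "z = Phi K U" by blast
    have "det (PU K U) \<noteq> 0" using PU_good[OF K U(1)] by blast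
    then show "z \<in> cls K ` (UNIV - {0})" unfolding U(2) Phi_def by blast
  qed
next
  show "cls K ` (UNIV - {0}) \<subseteq> Phi K ` (fat_subspaces K CARD('n) :: ('a::field^'n::finite) set set)"
  proof
    fix z assume "z \<in> cls K ` (UNIV - {0::'a})"
    then obtain x :: 'a where x: "x \<noteq> 0" "z = cls K x" by blast
    define Px where "Px = ((\<chi> i. if i = ei 0 then x *s (mat 1 :: 'a^'n^'n) $ i else (mat 1 :: 'a^'n^'n) $ i) :: 'a^'n^'n)"
    have dP: "det Px = x" unfolding Px_def scale_row_det by simp
    define Ux where "Ux = spK K (\<lambda>i. Px $ ei i) CARD('n)"
    have Uf: "Ux \<in> (fat_subspaces K CARD('n) :: ('a^'n) set set)"
      unfolding Ux_def by (rule fat_from_det[OF K]) (use dP x in simp)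
    note G = PU_good[OF K Uf]
    have "det (PU K Ux) / det Px \<in> K"
      by (rule orb_fw[OF K _ Ux_def conjunct2[OF G] orbit_self]) (use dP x in simp)
    then have "cls K x = Phi K Ux" unfolding Phi_def using cls_eq[OF K x(1) conjunct1[OF G]] dP by simp
    then show "z \<in> Phi K ` (fat_subspaces K CARD('n) :: ('a^'n) set set)" using Uf x by blast
  qed
qed

lemma orbit_card_le:
  assumes K: "subfield K"
    and U: "U \<in> (fat_subspaces K CARD('n) :: ('a::{field,finite}^'n::finite) set set)"
    and W: "W \<in> (fat_subspaces K CARD('n) :: ('a::{field,finite}^'n::finite) set set)"
  shows "card (SL_orbit U) \<le> card (SL_orbit W)"
proof -
  obtain P :: "'a^'n^'n" where P: "det P \<noteq> 0" "U = spK K (\<lambda>i. P $ ei i) CARD('n)"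
    using fat_good[OF K U] by blast
  obtain Q :: "'a^'n^'n" where Q: "det Q \<noteq> 0" "W = spK K (\<lambda>i. Q $ ei i) CARD('n)"
    using fat_good[OF K W] by blast
  define D where "D = matrix_inv P ** Q"
  have dD: "det D \<noteq> 0" unfolding D_def gen_map(2)[OF P(1)] using P Q by simp
  have DU: "act D U = W" unfolding D_def P(2) Q(2) by (rule gen_map(1)[OF P(1)])
  have bk: "act (matrix_inv D) (act D X) = X" for X
  proof -
    have "act (matrix_inv D) (act D X) = act (D ** matrix_inv D) X" by (simp add: act_mult)
    also have "\<dots> = X" by (simp add: inv_right[OF dD] act_one)
    finally show ?thesis .
  qed
  have inj: "inj_on (act D) (SL_orbit U)"
  proof (rule inj_onI)
    fix X Y assume "act D X = act D Y"
    then have "act (matrix_inv D) (act D X) = act (matrix_inv D) (act D Y)" by simp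
    then show "X = Y" by (simp add: bk)
  qed
  have sub: "act D ` SL_orbit U \<subseteq> SL_orbit W"
  proof
    fix Y assume "Y \<in> act D ` SL_orbit U"
    then obtain A :: "'a^'n^'n" where A: "det A = 1" "Y = act D (act A U)"
      unfolding SL_orbit_def by blast
    define E where "E = matrix_inv D ** (A ** D)"
    have DE: "D ** E = A ** D" unfolding E_def by (simp add: matrix_mul_assoc inv_right[OF dD])
    have "Y = act (A ** D) U" using A(2) by (simp add: act_mult)
    also have "\<dots> = act (D ** E) U" using DE by simp
    also have "\<dots> = act E W" using DU by (simp add: act_mult)
    finally have "Y = act E W" .
    moreover have "det E = 1" unfolding E_def using A(1) dD by (simp add: det_mul det_inv[OF dD])
    ultimately show "Y \<in> SL_orbit W" unfolding SL_orbit_def by blast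
  qed
  show ?thesis by (rule card_inj_on_le[OF inj sub]) simp
qed

lemma part1:
  assumes K: "subfield K" and k: "k < CARD('n)"
    and U: "U \<in> (fat_subspaces K k :: ('a::field^'n::finite) set set)"
    and W: "W \<in> (fat_subspaces K k :: ('a::field^'n::finite) set set)"
  shows "\<exists>A :: 'a^'n^'n. det A = 1 \<and> act A U = W"
proof -
  let ?n = "CARD('n)"
  obtain u where u: "K_basis K U u k" and du: "vec.dim U = k"
    using U unfolding fat_subspaces_def K_dim_eq_def by blast
  obtain w where w: "K_basis K W w k" and dw: "vec.dim W = k"
    using W unfolding fat_subspaces_def K_dim_eq_def by blast
  obtain hu where hu: "\<forall>i<k. hu i = u i" "famind hu ?n"
    using ext_fam[OF basis_famind[OF K u du]] k by auto
  obtain hw where hw: "\<forall>i<k. hw i = w i" "famind hw ?n"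
    using ext_fam[OF basis_famind[OF K w dw]] k by auto
  define P where "P = ((\<chi> j. hu (ie j)) :: 'a^'n^'n)"
  define Q where "Q = ((\<chi> j. hw (ie j)) :: 'a^'n^'n)"
  have dP: "det P \<noteq> 0" unfolding P_def by (rule famdet[OF hu(2)])
  have dQ: "det Q \<noteq> 0" unfolding Q_def by (rule famdet[OF hw(2)])
  define c where "c = det P / det Q"
  define Q' where "Q' = ((\<chi> i. if i = ei (?n - 1) then c *s Q $ i else Q $ i) :: 'a^'n^'n)"
  have dQ': "det Q' = det P" unfolding Q'_def scale_row_det c_def using dQ by simp
  have U2: "U = spK K (\<lambda>i. P $ ei i) k"
  proof -
    have "U = spK K u k" using u unfolding K_basis_def spK_def by simp
    also have "\<dots> = spK K (\<lambda>i. P $ ei i) k"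
    proof (rule spK_cong)
      fix i assume i: "i < k"
      then have i2: "i < CARD('n)" using k by simp
      show "u i = P $ ei i" using hu(1) i i2 by (simp add: P_def ie_ei)
    qed
    finally show ?thesis .
  qed
  have W2: "spK K (\<lambda>i. Q' $ ei i) k = W"
  proof -
    have ne: "ei i \<noteq> (ei (?n - 1) :: 'n)" if "i < k" for i
      using ei_inj[where 'n='n, of i "?n - 1"] that k by auto
    have "spK K (\<lambda>i. Q' $ ei i) k = spK K w k"
    proof (rule spK_cong)
      fix i assume i: "i < k"
      then have i2: "i < CARD('n)" using k by simp
      show "Q' $ ei i = w i" using hw(1) i i2 ne[OF i] by (simp add: Q'_def Q_def ie_ei)
    qed
    also have "\<dots> = W" using w unfolding K_basis_def spK_def by simp
    finally show ?thesis .
  qed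
  have "act (matrix_inv P ** Q') U = W" unfolding U2 gen_map(1)[OF dP] W2 ..
  moreover have "det (matrix_inv P ** Q') = 1" unfolding gen_map(2)[OF dP] dQ' using dP by simp
  ultimately show ?thesis by blast
qed

theorem lemma13:
  fixes K :: "'a::{field,finite} set" and g k :: nat
  assumes "subfield K"
    and "g \<ge> 1"
    and "CARD('a) = card K ^ g"
    and "1 \<le> k" and "k \<le> CARD('n::finite)"
  shows "(k < CARD('n) \<longrightarrow>
           (\<forall>U \<in> (fat_subspaces K k :: ('a^'n) set set). \<forall>W \<in> fat_subspaces K k.
              \<exists>A :: 'a^'n^'n. det A = 1 \<and> act A U = W))
       \<and> (k = CARD('n) \<longrightarrow>
           real (card (SL_orbit ` (fat_subspaces K k :: ('a^'n) set set)))
             = (real (card K) ^ g - 1) / (real (card K) - 1)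
           \<and> (\<forall>O1 \<in> SL_orbit ` (fat_subspaces K k :: ('a^'n) set set).
                \<forall>O2 \<in> SL_orbit ` (fat_subspaces K k :: ('a^'n) set set). card O1 = card O2))"
proof (intro conjI impI)
  assume "k < CARD('n)"
  then show "\<forall>U \<in> (fat_subspaces K k :: ('a^'n) set set). \<forall>W \<in> fat_subspaces K k.
              \<exists>A :: 'a^'n^'n. det A = 1 \<and> act A U = W"
    using part1[OF assms(1)] by blast
next
  assume kn: "k = CARD('n)"
  let ?F = "fat_subspaces K CARD('n) :: ('a^'n) set set"
  have "card (SL_orbit ` ?F) = card (Phi K ` ?F)"
    by (rule card_img_eq) (rule key[OF assms(1)])
  also have "\<dots> = card (cls K ` (UNIV - {0}))" by (simp add: Phi_img[OF assms(1)])
  finally have cF: "card (SL_orbit ` ?F) = card (cls K ` (UNIV - {0::'a}))" .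
  have cnt: "card (SL_orbit ` ?F) * (card K - 1) = card K ^ g - 1"
    using cls_count[OF assms(1)] cF assms(3) by simp
  have "{0, 1} \<subseteq> K" using sf_basic(1,2)[OF assms(1)] by simp
  then have "card {0::'a, 1} \<le> card K" by (rule card_mono[rotated]) simp
  then have K2: "2 \<le> card K" by simp
  then have "1 \<le> card K ^ g" by simp
  moreover have "real (card (SL_orbit ` ?F) * (card K - 1)) = real (card K ^ g - 1)" using cnt by simp
  ultimately have "real (card (SL_orbit ` ?F)) * (real (card K) - 1) = real (card K) ^ g - 1"
    using K2 by (simp add: of_nat_diff)
  moreover have "real (card K) - 1 \<noteq> 0" using K2 by simp
  ultimately have "real (card (SL_orbit ` ?F)) = (real (card K) ^ g - 1) / (real (card K) - 1)"
    by (simp add: field_simps)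
  then show "real (card (SL_orbit ` (fat_subspaces K k :: ('a^'n) set set)))
             = (real (card K) ^ g - 1) / (real (card K) - 1)" using kn by simp
  show "\<forall>O1 \<in> SL_orbit ` (fat_subspaces K k :: ('a^'n) set set).
                \<forall>O2 \<in> SL_orbit ` (fat_subspaces K k :: ('a^'n) set set). card O1 = card O2"
    using orbit_card_le[OF assms(1)] kn by (auto intro: antisym)
qed


end
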